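(* Let $\mathbf{x}\in\mathcal{P}$ and consider the scaled-down notification policy run with ex ante solution $\mathbf{x}$. Under the index-based priority scheme, for every volunteer $v\in[V]$, the expected number of tasks completed by $v$ is at least $\frac{1}{2-q}f_v(\mathbf{x})$, where $f_v(\mathbf{x})=\sum_{t=1}^T\sum_{s=1}^S\lambda_{s,t}\big(\prod_{u<v}(1-p_{u,s}x_{u,s,t})\big)p_{v,s}x_{v,s,t}$ and $q$ is the minimum discrete hazard rate of $g$.
   Context: Online volunteer notification problem. An instance consists of volunteers $[V]$, task types $[S]$, horizon $T$, arrival probabilities $\lambda_{s,t}\ge0$ with $\sum_s\lambda_{s,t}\le1$, match probabilities $p_{v,s}\in[0,1]$, and a probability mass function $g$ on the positive integers with CDF $G(\tau)=\sum_{i\le\tau}g(i)$, $G(0)=0$. In each period $t$ at most one task arrives, of type $s$ with probability $\lambda_{s,t}$, independently across periods. All volunteers start active. Upon an arrival the platform notifies a subset of volunteers; each notified active volunteer $v$ responds positively independently with probability $p_{v,s}$. A volunteer active and notified at time $t$ becomes inactive (regardless of response) and active again at $t+Z$, $Z\sim g$ independent; inactive volunteers ignore notifications and are unaffected by them. Index-based priority scheme: if several notified active volunteers respond positively, the one with smallest index completes the task. MDHR: $q=\min_{\tau\in\mathbb{N}}\frac{g(\tau)}{1-G(\tau-1)}$ (with $\frac00:=1$). $\mathcal{P}$: set of $\mathbf{x}\in\mathbb{R}^{V\times S\times T}$ with $0\le x_{v,s,t}\le1$ and $\sum_{\tau=1}^t\sum_{s}\lambda_{s,\tau}x_{v,s,\tau}(1-G(t-\tau))\le1$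 for all $v,t$. SDN policy with ex ante solution $\mathbf{x}$: $\beta_{v,1}=1$, $\beta_{v,t}=1-\sum_{t'=1}^{t-1}\sum_{s=1}^S\lambda_{s,t'}\frac{x_{v,s,t'}}{2-q}(1-G(t-t'))$ for $t\ge2$; when a task of type $s$ arrives at time $t$, each volunteer $v$ is notified independently with probability $\frac{x_{v,s,t}}{(2-q)\beta_{v,t}}$. *)

theory Defs
  imports "HOL-Probability.Probability"
begin

text \<open>Conventions: volunteers are 1..V (smaller index = higher priority), task types 1..S,
periods 1..T. lam s t = arrival probability, p u s = match probability, g = recovery-time pmf
(on positive integers, i.e. pmf g 0 = 0). The platform state is a function st where st u is the
first period at which volunteer u is active again (u is active at period t iff st u \<le> t).\<close>

definition Gcdf :: "nat pmf \<Rightarrow> nat \<Rightarrow> real" where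
  "Gcdf g \<tau> = (\<Sum>i=1..\<tau>. pmf g i)"

definition hazard :: "nat pmf \<Rightarrow> nat \<Rightarrow> real" where
  "hazard g \<tau> = (if 1 - Gcdf g (\<tau> - 1) = 0 then 1 else pmf g \<tau> / (1 - Gcdf g (\<tau> - 1)))"

definition mdhr :: "nat pmf \<Rightarrow> real" where
  "mdhr g = (INF \<tau>\<in>{1..}. hazard g \<tau>)"

definition in_P ::
  "nat \<Rightarrow> nat \<Rightarrow> nat \<Rightarrow> (nat \<Rightarrow> nat \<Rightarrow> real) \<Rightarrow> nat pmf \<Rightarrow> (nat \<Rightarrow> nat \<Rightarrow> nat \<Rightarrow> real) \<Rightarrow> bool" where
  "in_P V S T lam g x \<longleftrightarrow>
     (\<forall>v\<in>{1..V}. \<forall>s\<in>{1..S}. \<forall>t\<in>{1..T}. 0 \<le> x v s t \<and> x v s t \<le> 1) \<and>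
     (\<forall>v\<in>{1..V}. \<forall>t\<in>{1..T}.
        (\<Sum>\<tau>=1..t. \<Sum>s=1..S. lam s \<tau> * x v s \<tau> * (1 - Gcdf g (t - \<tau>))) \<le> 1)"

definition f_obj ::
  "nat \<Rightarrow> nat \<Rightarrow> (nat \<Rightarrow> nat \<Rightarrow> real) \<Rightarrow> (nat \<Rightarrow> nat \<Rightarrow> real) \<Rightarrow> (nat \<Rightarrow> nat \<Rightarrow> nat \<Rightarrow> real) \<Rightarrow> nat \<Rightarrow> real" where
  "f_obj S T lam p x v = (\<Sum>t=1..T. \<Sum>s=1..S.
      lam s t * (\<Prod>u\<in>{1..<v}. 1 - p u s * x u s t) * p v s * x v s t)"

definition sdn_beta ::
  "nat \<Rightarrow> (nat \<Rightarrow> nat \<Rightarrow> real) \<Rightarrow> nat pmf \<Rightarrow> (nat \<Rightarrow> nat \<Rightarrow> nat \<Rightarrow> real) \<Rightarrow> nat \<Rightarrow> nat \<Rightarrow> real" where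
  "sdn_beta S lam g x v t = 1 - (\<Sum>t'=1..t-1. \<Sum>s=1..S.
      lam s t' * (x v s t' / (2 - mdhr g)) * (1 - Gcdf g (t - t')))"

text \<open>SDN notification probability of volunteer v for a type-s task at time t
 (bernoulli_pmf clamps its parameter to [0,1]).\<close>
definition sdn_prob ::
  "nat \<Rightarrow> (nat \<Rightarrow> nat \<Rightarrow> real) \<Rightarrow> nat pmf \<Rightarrow> (nat \<Rightarrow> nat \<Rightarrow> nat \<Rightarrow> real) \<Rightarrow> nat \<Rightarrow> nat \<Rightarrow> nat \<Rightarrow> real" where
  "sdn_prob S lam g x v s t = x v s t / ((2 - mdhr g) * sdn_beta S lam g x v t)"

definition arrival_pmf :: "(nat \<Rightarrow> nat \<Rightarrow> real) \<Rightarrow> nat \<Rightarrow> nat \<Rightarrow> nat option pmf" where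
  "arrival_pmf lam S t = embed_pmf (\<lambda>a. case a of
       None \<Rightarrow> 1 - (\<Sum>s=1..S. lam s t)
     | Some s \<Rightarrow> (if s \<in> {1..S} then lam s t else 0))"

text \<open>One period t of the process under a (randomized, state-independent) notification
 rule nprob u s t, index-based priority. Returns (1 if v completes the task else 0, new state).\<close>
definition step ::
  "nat \<Rightarrow> nat \<Rightarrow> (nat \<Rightarrow> nat \<Rightarrow> real) \<Rightarrow> (nat \<Rightarrow> nat \<Rightarrow> real) \<Rightarrow> nat pmf
   \<Rightarrow> (nat \<Rightarrow> nat \<Rightarrow> nat \<Rightarrow> real) \<Rightarrow> nat \<Rightarrow> nat \<Rightarrow> (nat \<Rightarrow> nat) \<Rightarrow> (nat \<times> (nat \<Rightarrow> nat)) pmf" where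
  "step V S lam p g nprob v t st =
     bind_pmf (arrival_pmf lam S t) (\<lambda>a. case a of
        None \<Rightarrow> return_pmf (0, st)
      | Some s \<Rightarrow>
          bind_pmf (Pi_pmf {1..V} False (\<lambda>u. bernoulli_pmf (nprob u s t))) (\<lambda>N.
          bind_pmf (Pi_pmf {1..V} False (\<lambda>u. bernoulli_pmf (p u s))) (\<lambda>R.
          bind_pmf (Pi_pmf {1..V} 0 (\<lambda>u. g)) (\<lambda>Z.
            let act = (\<lambda>u. st u \<le> t);
                contrib = (\<lambda>u. u \<in> {1..V} \<and> N u \<and> act u \<and> R u)
            in return_pmf
                 (if contrib v \<and> (\<forall>u<v. \<not> contrib u) then 1 else 0,
                  \<lambda>u. if u \<in> {1..V} \<and> N u \<and> act u then t + Z u else st u)))))"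

primrec run ::
  "nat \<Rightarrow> nat \<Rightarrow> (nat \<Rightarrow> nat \<Rightarrow> real) \<Rightarrow> (nat \<Rightarrow> nat \<Rightarrow> real) \<Rightarrow> nat pmf
   \<Rightarrow> (nat \<Rightarrow> nat \<Rightarrow> nat \<Rightarrow> real) \<Rightarrow> nat \<Rightarrow> nat \<Rightarrow> nat \<Rightarrow> (nat \<Rightarrow> nat) \<Rightarrow> nat pmf" where
  "run V S lam p g nprob v 0 t st = return_pmf 0"
| "run V S lam p g nprob v (Suc n) t st =
     bind_pmf (step V S lam p g nprob v t st)
       (\<lambda>(r, st'). map_pmf ((+) r) (run V S lam p g nprob v n (Suc t) st'))"

definition sdn_expected_completed ::
  "nat \<Rightarrow> nat \<Rightarrow> nat \<Rightarrow> (nat \<Rightarrow> nat \<Rightarrow> real) \<Rightarrow> (nat \<Rightarrow> nat \<Rightarrow> real) \<Rightarrow> nat pmf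
   \<Rightarrow> (nat \<Rightarrow> nat \<Rightarrow> nat \<Rightarrow> real) \<Rightarrow> nat \<Rightarrow> real" where
  "sdn_expected_completed V S T lam p g x v =
     measure_pmf.expectation (run V S lam p g (sdn_prob S lam g x) v T 1 (\<lambda>u. 0)) real"

end

theory Submission
  imports Defs
begin


lemma E_bind:
  fixes h :: "'b \<Rightarrow> real"
  assumes "\<And>y. y \<in> set_pmf (bind_pmf M N) \<Longrightarrow> \<bar>h y\<bar> \<le> B"
  shows "measure_pmf.expectation (bind_pmf M N) h =
         measure_pmf.expectation M (\<lambda>x. measure_pmf.expectation (N x) h)"
proof -
  define h' where "h' = (\<lambda>y. max (-B) (min B (h y)))"
  obtain y0 where "y0 \<in> set_pmf (bind_pmf M N)" using set_pmf_not_empty[of "bind_pmf M N"] by blast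
  hence B0: "0 \<le> B" using assms[of y0] by linarith
  have hb: "h y = h' y" if "x \<in> set_pmf M" "y \<in> set_pmf (N x)" for x y
  proof -
    have "y \<in> set_pmf (bind_pmf M N)" using that by auto
    from assms[OF this] show ?thesis by (auto simp: h'_def)
  qed
  have 1: "measure_pmf.expectation (bind_pmf M N) h = measure_pmf.expectation (bind_pmf M N) h'"
    by (intro integral_cong_AE) (auto simp: AE_measure_pmf_iff intro: hb)
  have 2: "measure_pmf.expectation M (\<lambda>x. measure_pmf.expectation (N x) h) =
           measure_pmf.expectation M (\<lambda>x. measure_pmf.expectation (N x) h')"
  proof (intro integral_cong_AE)
    show "AE x in measure_pmf M. measure_pmf.expectation (N x) h = measure_pmf.expectation (N x) h'"
      unfolding AE_measure_pmf_iff
    proof safe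
      fix x assume x: "x \<in> set_pmf M"
      show "measure_pmf.expectation (N x) h = measure_pmf.expectation (N x) h'"
        by (intro integral_cong_AE) (use x in \<open>auto simp: AE_measure_pmf_iff intro: hb\<close>)
    qed
  qed auto
  have 3: "measure_pmf.expectation (bind_pmf M N) h' = measure_pmf.expectation M (\<lambda>x. measure_pmf.expectation (N x) h')"
    unfolding measure_pmf_bind
    by (rule integral_bind[where K="count_space UNIV" and B=B and B'=1])
       (use B0 in \<open>auto simp: h'_def measure_pmf.emeasure_space_1 measure_pmf_in_subprob_algebra\<close>)
  show ?thesis using 1 2 3 by simp
qed



lemma Gcdf_le1: "Gcdf g k \<le> 1"
proof -
  have "Gcdf g k = measure_pmf.prob g {1..k}"
    unfolding Gcdf_def by (simp add: measure_measure_pmf_finite)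
  thus ?thesis by simp
qed

lemma Gcdf_nonneg: "0 \<le> Gcdf g k"
  unfolding Gcdf_def by (simp add: sum_nonneg)

lemma Gcdf_Suc: "Gcdf g (Suc k) = Gcdf g k + pmf g (Suc k)"
  unfolding Gcdf_def by simp

lemma hazard_nonneg: "0 \<le> hazard g t"
  unfolding hazard_def using Gcdf_le1[of g "t-1"] by auto

lemma hazard_le1: "t \<ge> 1 \<Longrightarrow> hazard g t \<le> 1"
proof -
  assume t: "t \<ge> 1"
  have "Gcdf g t = Gcdf g (t-1) + pmf g t" using Gcdf_Suc[of g "t-1"] t by simp
  hence "pmf g t \<le> 1 - Gcdf g (t-1)" using Gcdf_le1[of g t] by linarith
  thus ?thesis unfolding hazard_def using Gcdf_le1[of g "t-1"]
    by (auto simp: divide_le_eq_1)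
qed

lemma bdd_hazard: "bdd_below (hazard g ` A)"
  by (rule bdd_belowI[of _ 0]) (auto simp: hazard_nonneg)

lemma mdhr_le_hazard: "t \<ge> 1 \<Longrightarrow> mdhr g \<le> hazard g t"
  unfolding mdhr_def by (rule cINF_lower[OF bdd_hazard]) auto

lemma mdhr_nonneg: "0 \<le> mdhr g"
  unfolding mdhr_def by (rule cINF_greatest) (auto simp: hazard_nonneg)

lemma mdhr_le1: "mdhr g \<le> 1"
  using mdhr_le_hazard[of 1 g] hazard_le1[of 1 g] by simp

lemma tail_step:
  assumes "k \<ge> 1"
  shows "1 - Gcdf g k \<le> (1 - mdhr g) * (1 - Gcdf g (k - 1))"
proof -
  have eq: "Gcdf g k = Gcdf g (k-1) + pmf g k" using Gcdf_Suc[of g "k-1"] assms by simp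
  have le: "pmf g k \<le> 1 - Gcdf g (k-1)" using eq Gcdf_le1[of g k] by linarith
  show ?thesis
  proof (cases "1 - Gcdf g (k-1) = 0")
    case True
    then show ?thesis using eq le by simp
  next
    case False
    hence pos: "0 < 1 - Gcdf g (k-1)" using Gcdf_le1[of g "k-1"] by linarith
    have "mdhr g \<le> pmf g k / (1 - Gcdf g (k-1))"
      using mdhr_le_hazard[OF assms, of g] False unfolding hazard_def by simp
    hence "mdhr g * (1 - Gcdf g (k-1)) \<le> pmf g k" using pos by (simp add: le_divide_eq)
    then show ?thesis using eq by (simp add: algebra_simps)
  qed
qed

lemma beta_lower:
  assumes lam_nonneg: "\<And>s t. s \<in> {1..S} \<Longrightarrow> t \<in> {1..T} \<Longrightarrow> 0 \<le> lam s t"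
    and xP: "in_P V S T lam g x"
    and v: "v \<in> {1..V}" and t: "t \<in> {1..T}"
  shows "1 / (2 - mdhr g) \<le> sdn_beta S lam g x v t"
proof -
  let ?q = "mdhr g"
  have q0: "0 \<le> ?q" and q1: "?q \<le> 1" by (rule mdhr_nonneg, rule mdhr_le1)
  have d: "1 \<le> 2 - ?q" using q1 by simp
  define A where "A = (\<Sum>t'=1..t-1. \<Sum>s=1..S. lam s t' * x v s t' * (1 - Gcdf g (t - t')))"
  have beq: "sdn_beta S lam g x v t = 1 - A / (2 - ?q)"
    unfolding sdn_beta_def A_def by (simp add: sum_divide_distrib)
  have x01: "0 \<le> x v s t' \<and> x v s t' \<le> 1" if "s \<in> {1..S}" "t' \<in> {1..T}" for s t'
    using xP v that unfolding in_P_def by blast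
  have "A \<le> 1 - ?q"
  proof (cases "t = 1")
    case True
    then show ?thesis using q1 by (simp add: A_def)
  next
    case False
    hence t2: "t \<ge> 2" using t by auto
    have "A \<le> (\<Sum>t'=1..t-1. \<Sum>s=1..S. lam s t' * x v s t' * ((1 - ?q) * (1 - Gcdf g (t - 1 - t'))))"
      unfolding A_def
    proof (intro sum_mono mult_left_mono)
      fix t' s assume t': "t' \<in> {1..t-1}" and s: "s \<in> {1..S}"
      have "1 - Gcdf g (t - t') \<le> (1 - ?q) * (1 - Gcdf g (t - t' - 1))"
        by (rule tail_step) (use t' in auto)
      thus "1 - Gcdf g (t - t') \<le> (1 - ?q) * (1 - Gcdf g (t - 1 - t'))" by (simp add: diff_commute)
      show "0 \<le> lam s t' * x v s t'" using lam_nonneg[OF s] x01[OF s] t' t by auto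
    qed
    also have "\<dots> = (1 - ?q) * (\<Sum>t'=1..t-1. \<Sum>s=1..S. lam s t' * x v s t' * (1 - Gcdf g (t - 1 - t')))"
      by (simp add: sum_distrib_left algebra_simps)
    also have "\<dots> \<le> (1 - ?q) * 1"
    proof (intro mult_left_mono)
      show "(\<Sum>t'=1..t-1. \<Sum>s=1..S. lam s t' * x v s t' * (1 - Gcdf g (t - 1 - t'))) \<le> 1"
      proof -
        have c: "\<forall>t\<in>{1..T}. (\<Sum>\<tau>=1..t. \<Sum>s=1..S. lam s \<tau> * x v s \<tau> * (1 - Gcdf g (t - \<tau>))) \<le> 1"
          using xP v unfolding in_P_def by blast
        have tm: "t - 1 \<in> {1..T}" using t t2 by auto
        from bspec[OF c tm] show ?thesis .
      qed
    qed (use q1 in auto)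
    finally show ?thesis by simp
  qed
  hence "A / (2 - ?q) \<le> (1 - ?q) / (2 - ?q)" using d by (simp add: divide_right_mono)
  hence "sdn_beta S lam g x v t \<ge> 1 - (1 - ?q) / (2 - ?q)" using beq by simp
  also have "1 - (1 - ?q) / (2 - ?q) = 1 / (2 - ?q)" using d by (simp add: field_simps)
  finally show ?thesis .
qed



lemma E_bind':
  fixes h :: "'b \<Rightarrow> real"
  assumes "\<And>y. \<bar>h y\<bar> \<le> B"
  shows "measure_pmf.expectation (bind_pmf M N) h =
         measure_pmf.expectation M (\<lambda>x. measure_pmf.expectation (N x) h)"
  by (rule E_bind[of _ _ h B]) (use assms in auto)


lemma pmf_arrival:
  assumes nn: "\<forall>s\<in>{1..S}. 0 \<le> lam s t" and sm: "(\<Sum>s=1..S. lam s t) \<le> 1"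
  shows "pmf (arrival_pmf lam S t) a = (case a of None \<Rightarrow> 1 - (\<Sum>s=1..S. lam s t)
     | Some s \<Rightarrow> (if s \<in> {1..S} then lam s t else 0))"
proof -
  define f where "f = (\<lambda>a. case a of None \<Rightarrow> 1 - (\<Sum>s=1..S. lam s t)
     | Some s \<Rightarrow> (if s \<in> {1..S} then lam s t else (0::real)))"
  have f0: "0 \<le> f a" for a using nn sm by (auto simp: f_def split: option.split)
  define A where "A = insert None (Some ` {1..S})"
  have "(\<integral>\<^sup>+a. ennreal (f a) \<partial>count_space UNIV) = (\<Sum>a\<in>A. ennreal (f a))"
    by (rule nn_integral_count_space') (auto simp: A_def f_def split: option.split)
  also have "\<dots> = ennreal (\<Sum>a\<in>A. f a)" by (rule sum_ennreal) (use f0 in auto)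
  also have "(\<Sum>a\<in>A. f a) = f None + (\<Sum>a\<in>Some ` {1..S}. f a)"
    unfolding A_def by (subst sum.insert) auto
  also have "(\<Sum>a\<in>Some ` {1..S}. f a) = (\<Sum>s=1..S. lam s t)"
    by (subst sum.reindex) (auto simp: f_def)
  finally have "(\<integral>\<^sup>+a. ennreal (f a) \<partial>count_space UNIV) = 1" by (simp add: f_def)
  thus ?thesis unfolding arrival_pmf_def f_def[symmetric]
    by (subst pmf_embed_pmf) (use f0 in auto)
qed

lemma E_arrival:
  fixes F :: "nat option \<Rightarrow> real"
  assumes nn: "\<forall>s\<in>{1..S}. 0 \<le> lam s t" and sm: "(\<Sum>s=1..S. lam s t) \<le> 1"
  shows "measure_pmf.expectation (arrival_pmf lam S t) F =
     (1 - (\<Sum>s=1..S. lam s t)) * F None + (\<Sum>s=1..S. lam s t * F (Some s))"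
proof -
  define A where "A = insert None (Some ` {1..S})"
  have p0: "pmf (arrival_pmf lam S t) None = 1 - (\<Sum>s=1..S. lam s t)"
    by (subst pmf_arrival[where lam=lam and S=S and t=t, OF nn sm]) simp
  have pS: "pmf (arrival_pmf lam S t) (Some s) = lam s t" if "s \<in> {1..S}" for s
    by (subst pmf_arrival[where lam=lam and S=S and t=t, OF nn sm]) (use that in simp)
  have "measure_pmf.expectation (arrival_pmf lam S t) F = (\<Sum>a\<in>A. F a * pmf (arrival_pmf lam S t) a)"
  proof (rule integral_measure_pmf_real)
    show "finite A" by (simp add: A_def)
    fix a assume "a \<in> set_pmf (arrival_pmf lam S t)"
    hence "pmf (arrival_pmf lam S t) a \<noteq> 0" by (simp add: set_pmf_iff)
    hence "(case a of None \<Rightarrow> 1 - (\<Sum>s=1..S. lam s t)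
     | Some s \<Rightarrow> (if s \<in> {1..S} then lam s t else 0)) \<noteq> 0"
      by (subst (asm) pmf_arrival[where lam=lam and S=S and t=t, OF nn sm])
    thus "a \<in> A" by (cases a) (auto simp: A_def split: if_splits)
  qed
  also have "\<dots> = F None * (1 - (\<Sum>s=1..S. lam s t)) + (\<Sum>a\<in>Some ` {1..S}. F a * pmf (arrival_pmf lam S t) a)"
    unfolding A_def by (subst sum.insert) (auto simp: p0)
  also have "(\<Sum>a\<in>Some ` {1..S}. F a * pmf (arrival_pmf lam S t) a) = (\<Sum>s=1..S. lam s t * F (Some s))"
    by (subst sum.reindex) (auto simp: pS intro!: sum.cong)
  finally show ?thesis by simp
qed

lemma E_bind3:
  fixes h :: "'d \<Rightarrow> real"
  assumes hb: "\<And>y. \<bar>h y\<bar> \<le> B"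
  shows "measure_pmf.expectation (bind_pmf A (\<lambda>a. bind_pmf (BB a) (\<lambda>b. bind_pmf (C a b) (\<lambda>c. return_pmf (F a b c))))) h
     = measure_pmf.expectation A (\<lambda>a. measure_pmf.expectation (BB a) (\<lambda>b. measure_pmf.expectation (C a b) (\<lambda>c. h (F a b c))))"
  apply (subst E_bind'[where h=h and B=B, OF hb])
  apply (rule Bochner_Integration.integral_cong[OF refl])
  apply (subst E_bind'[where h=h and B=B, OF hb])
  apply (rule Bochner_Integration.integral_cong[OF refl])
  apply (subst E_bind'[where h=h and B=B, OF hb])
  apply (rule Bochner_Integration.integral_cong[OF refl])
  apply simp
  done

lemma E_step:
  fixes h :: "nat \<times> (nat \<Rightarrow> nat) \<Rightarrow> real"
  assumes nn: "\<forall>s\<in>{1..S}. 0 \<le> lam s t" and sm: "(\<Sum>s=1..S. lam s t) \<le> 1"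
    and hb: "\<And>y. \<bar>h y\<bar> \<le> B"
  shows "measure_pmf.expectation (step V S lam p g nprob v t st) h =
     (1 - (\<Sum>s=1..S. lam s t)) * h (0, st) + (\<Sum>s=1..S. lam s t *
       measure_pmf.expectation (Pi_pmf {1..V} False (\<lambda>u. bernoulli_pmf (nprob u s t))) (\<lambda>N.
       measure_pmf.expectation (Pi_pmf {1..V} False (\<lambda>u. bernoulli_pmf (p u s))) (\<lambda>R.
       measure_pmf.expectation (Pi_pmf {1..V} 0 (\<lambda>u. g)) (\<lambda>Z.
         h (if (v \<in> {1..V} \<and> N v \<and> st v \<le> t \<and> R v) \<and> (\<forall>u<v. \<not> (u \<in> {1..V} \<and> N u \<and> st u \<le> t \<and> R u)) then 1 else 0,
            \<lambda>u. if u \<in> {1..V} \<and> N u \<and> st u \<le> t then t + Z u else st u)))))"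
    (is "_ = ?rhs")
proof -
  have "measure_pmf.expectation (step V S lam p g nprob v t st) h =
    measure_pmf.expectation (arrival_pmf lam S t) (\<lambda>a. measure_pmf.expectation (case a of
        None \<Rightarrow> return_pmf (0, st)
      | Some s \<Rightarrow>
          bind_pmf (Pi_pmf {1..V} False (\<lambda>u. bernoulli_pmf (nprob u s t))) (\<lambda>N.
          bind_pmf (Pi_pmf {1..V} False (\<lambda>u. bernoulli_pmf (p u s))) (\<lambda>R.
          bind_pmf (Pi_pmf {1..V} 0 (\<lambda>u. g)) (\<lambda>Z.
            let act = (\<lambda>u. st u \<le> t);
                contrib = (\<lambda>u. u \<in> {1..V} \<and> N u \<and> act u \<and> R u)
            in return_pmf
                 (if contrib v \<and> (\<forall>u<v. \<not> contrib u) then 1 else 0,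
                  \<lambda>u. if u \<in> {1..V} \<and> N u \<and> act u then t + Z u else st u))))) h)"
    unfolding step_def by (rule E_bind'[where h=h and B=B, OF hb])
  also have "\<dots> = ?rhs"
    apply (subst E_arrival[where lam=lam and S=S and t=t, OF nn sm])
    apply (simp only: option.case)
    apply (intro arg_cong2[where f="(+)"] refl sum.cong arg_cong2[where f="(*)"])
     apply simp
    apply (unfold Let_def)
    apply (rule E_bind3[OF hb])
    done
  finally show ?thesis .
qed



lemma E_indicator: "measure_pmf.expectation M (\<lambda>x. if P x then 1 else 0 :: real) = measure_pmf.prob M {x. P x}"
proof -
  have "(\<lambda>x. if P x then 1 else 0 :: real) = indicator {x. P x}" by (auto simp: indicator_def)
  thus ?thesis by simp
qed

lemma prob_bern: "0 \<le> a \<Longrightarrow> a \<le> 1 \<Longrightarrow> measure_pmf.prob (bernoulli_pmf a) X =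
   (if True \<in> X then a else 0) + (if False \<in> X then 1 - a else 0)"
proof -
  assume a: "0 \<le> a" "a \<le> 1"
  have "measure_pmf.prob (bernoulli_pmf a) X = (\<Sum>b\<in>X. pmf (bernoulli_pmf a) b)"
    by (rule measure_measure_pmf_finite) simp
  also have "\<dots> = (\<Sum>b\<in>UNIV. if b \<in> X then pmf (bernoulli_pmf a) b else 0)"
    using sum.inter_restrict[of "UNIV::bool set" "pmf (bernoulli_pmf a)" X] by simp
  finally show ?thesis using a by (simp add: UNIV_bool)
qed

lemma completion_exact:
  fixes np pp :: "nat \<Rightarrow> real" and act :: "nat \<Rightarrow> bool"
  assumes v: "v \<in> {1..V}"
    and np01: "\<forall>u\<in>{1..V}. 0 \<le> np u \<and> np u \<le> 1"
    and p01: "\<forall>u\<in>{1..V}. 0 \<le> pp u \<and> pp u \<le> 1"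
  shows "measure_pmf.expectation (Pi_pmf {1..V} False (\<lambda>u. bernoulli_pmf (np u))) (\<lambda>N.
       measure_pmf.expectation (Pi_pmf {1..V} False (\<lambda>u. bernoulli_pmf (pp u))) (\<lambda>R.
         if (v \<in> {1..V} \<and> N v \<and> act v \<and> R v) \<and> (\<forall>u<v. \<not> (u \<in> {1..V} \<and> N u \<and> act u \<and> R u)) then 1 else 0))
    = (\<Prod>u\<in>{1..V}. if u = v then (if act v then np v * pp v else 0)
                     else if u < v then 1 - (if act u then np u * pp u else 0) else 1)"
proof -
  define Bs where "Bs N u = (if u = v then {b. b \<and> N v \<and> act v} else if u < v then {b. \<not> (N u \<and> act u \<and> b)} else UNIV)" for N u
  define F where "F u b = (if u = v then (if b \<and> act v then pp v else 0)
          else if u < v then (if b \<and> act u then 1 - pp u else 1) else 1)" for u b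
  have inner: "measure_pmf.expectation (Pi_pmf {1..V} False (\<lambda>u. bernoulli_pmf (pp u))) (\<lambda>R.
         if (v \<in> {1..V} \<and> N v \<and> act v \<and> R v) \<and> (\<forall>u<v. \<not> (u \<in> {1..V} \<and> N u \<and> act u \<and> R u)) then 1 else 0)
      = (\<Prod>u\<in>{1..V}. F u (N u))" for N
  proof -
    have set_eq: "{R. (v \<in> {1..V} \<and> N v \<and> act v \<and> R v) \<and> (\<forall>u<v. \<not> (u \<in> {1..V} \<and> N u \<and> act u \<and> R u))}
        = Pi {1..V} (Bs N)"
      using v by (auto simp: Bs_def Pi_def)
    have "measure_pmf.expectation (Pi_pmf {1..V} False (\<lambda>u. bernoulli_pmf (pp u))) (\<lambda>R.
         if (v \<in> {1..V} \<and> N v \<and> act v \<and> R v) \<and> (\<forall>u<v. \<not> (u \<in> {1..V} \<and> N u \<and> act u \<and> R u)) then 1 else 0)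
       = measure_pmf.prob (Pi_pmf {1..V} False (\<lambda>u. bernoulli_pmf (pp u))) (Pi {1..V} (Bs N))"
      by (subst E_indicator) (simp only: set_eq)
    also have "\<dots> = (\<Prod>u\<in>{1..V}. measure_pmf.prob (bernoulli_pmf (pp u)) (Bs N u))"
      by (rule measure_Pi_pmf_Pi) simp
    also have "\<dots> = (\<Prod>u\<in>{1..V}. F u (N u))"
    proof (rule prod.cong[OF refl])
      fix u assume u: "u \<in> {1..V}"
      show "measure_pmf.prob (bernoulli_pmf (pp u)) (Bs N u) = F u (N u)"
        using p01 u by (subst prob_bern) (auto simp: Bs_def F_def)
    qed
    finally show ?thesis .
  qed
  have "measure_pmf.expectation (Pi_pmf {1..V} False (\<lambda>u. bernoulli_pmf (np u))) (\<lambda>N. \<Prod>u\<in>{1..V}. F u (N u))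
      = (\<Prod>u\<in>{1..V}. measure_pmf.expectation (bernoulli_pmf (np u)) (F u))"
  proof (rule expectation_prod_Pi_pmf)
    show "\<And>x. x \<in> {1..V} \<Longrightarrow> integrable (measure_pmf (bernoulli_pmf (np x))) (F x)"
      by (rule integrable_measure_pmf_finite) simp
    show "\<And>x y. x \<in> {1..V} \<Longrightarrow> y \<in> set_pmf (bernoulli_pmf (np x)) \<Longrightarrow> 0 \<le> F x y"
      using p01 by (auto simp: F_def)
  qed simp
  also have "\<dots> = (\<Prod>u\<in>{1..V}. if u = v then (if act v then np v * pp v else 0)
                     else if u < v then 1 - (if act u then np u * pp u else 0) else 1)"
  proof (rule prod.cong[OF refl])
    fix u assume u: "u \<in> {1..V}"
    show "measure_pmf.expectation (bernoulli_pmf (np u)) (F u) = (if u = v then (if act v then np v * pp v else 0)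
                     else if u < v then 1 - (if act u then np u * pp u else 0) else 1)"
      using np01 u v by (auto simp: F_def algebra_simps)
  qed
  finally show ?thesis using inner by simp
qed



lemma completion_lower_prod:
  fixes np pp xx :: "nat \<Rightarrow> real" and act :: "nat \<Rightarrow> bool"
  assumes v: "v \<in> {1..V}"
    and np01: "\<forall>u\<in>{1..V}. 0 \<le> np u \<and> np u \<le> xx u"
    and p01: "\<forall>u\<in>{1..V}. 0 \<le> pp u \<and> pp u \<le> 1"
    and x01: "\<forall>u\<in>{1..V}. xx u \<le> 1"
  shows "(\<Prod>u\<in>{1..V}. if u = v then (if act v then np v * pp v else 0)
                     else if u < v then 1 - (if act u then np u * pp u else 0) else 1)
       \<ge> (if act v then np v * pp v else 0) * (\<Prod>u\<in>{1..<v}. 1 - pp u * xx u)"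
proof -
  have "(\<Prod>u\<in>{1..V}. if u = v then (if act v then np v * pp v else 0)
                     else if u < v then 1 - (if act u then np u * pp u else 0) else 1)
      \<ge> (\<Prod>u\<in>{1..V}. (if u = v then (if act v then np v * pp v else 0) else 1) *
                        (if u < v then 1 - pp u * xx u else 1))"
  proof (rule prod_mono)
    fix u assume u: "u \<in> {1..V}"
    have h: "0 \<le> np u" "np u \<le> xx u" "0 \<le> pp u" "pp u \<le> 1" "xx u \<le> 1"
      using np01 p01 x01 u by auto
    have a: "0 \<le> np u * pp u" "np u * pp u \<le> pp u * xx u" "pp u * xx u \<le> 1"
    proof -
      show "0 \<le> np u * pp u" using h by simp
      have "pp u * np u \<le> pp u * xx u" using h by (intro mult_left_mono) auto
      thus "np u * pp u \<le> pp u * xx u" by (simp add: mult.commute)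
      show "pp u * xx u \<le> 1" using h by (intro mult_le_one) auto
    qed
    show "0 \<le> (if u = v then (if act v then np v * pp v else 0) else 1) * (if u < v then 1 - pp u * xx u else 1) \<and>
         (if u = v then (if act v then np v * pp v else 0) else 1) * (if u < v then 1 - pp u * xx u else 1)
         \<le> (if u = v then (if act v then np v * pp v else 0)
                     else if u < v then 1 - (if act u then np u * pp u else 0) else 1)"
      using a by auto
  qed
  also have "(\<Prod>u\<in>{1..V}. (if u = v then (if act v then np v * pp v else 0) else 1) *
                        (if u < v then 1 - pp u * xx u else 1))
      = (if act v then np v * pp v else 0) * (\<Prod>u\<in>{1..<v}. 1 - pp u * xx u)"
  proof -
    have "(\<Prod>u\<in>{1..V}. (if u = v then (if act v then np v * pp v else 0) else 1)) = (if act v then np v * pp v else 0)"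
      using v by (subst prod.delta) auto
    moreover have "(\<Prod>u\<in>{1..V}. (if u < v then 1 - pp u * xx u else 1)) = (\<Prod>u\<in>{1..<v}. 1 - pp u * xx u)"
    proof -
      have "(\<Prod>u\<in>{1..V}. (if u < v then 1 - pp u * xx u else 1)) = (\<Prod>u\<in>{1..V} \<inter> {u. u < v}. 1 - pp u * xx u)"
        by (subst prod.inter_restrict) auto
      also have "{1..V} \<inter> {u. u < v} = {1..<v}" using v by auto
      finally show ?thesis .
    qed
    ultimately show ?thesis by (simp add: prod.distrib)
  qed
  finally show ?thesis .
qed

lemma E_component:
  fixes f :: "'b \<Rightarrow> real"
  assumes "finite A" "v \<in> A"
  shows "measure_pmf.expectation (Pi_pmf A d p) (\<lambda>Z. f (Z v)) = measure_pmf.expectation (p v) f"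
proof -
  have "measure_pmf.expectation (Pi_pmf A d p) (\<lambda>Z. f (Z v)) =
        measure_pmf.expectation (map_pmf (\<lambda>Z. Z v) (Pi_pmf A d p)) f" by simp
  also have "map_pmf (\<lambda>Z. Z v) (Pi_pmf A d p) = (if v \<in> A then p v else return_pmf d)"
    by (rule Pi_pmf_component[OF assms(1)])
  also have "\<dots> = p v" using assms(2) by simp
  finally show ?thesis .
qed

lemma E_tail:
  assumes g0: "pmf g 0 = 0" and m: "t \<le> m"
  shows "measure_pmf.expectation g (\<lambda>z. if m < t + z then 1 else 0 :: real) = 1 - Gcdf g (m - t)"
proof -
  have "measure_pmf.expectation g (\<lambda>z. if m < t + z then 1 else 0 :: real) = measure_pmf.prob g {z. m < t + z}"
    by (rule E_indicator)
  also have "{z. m < t + z} = UNIV - {..m-t}" using m by auto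
  also have "measure_pmf.prob g (UNIV - {..m-t}) = 1 - measure_pmf.prob g {..m-t}"
    using measure_pmf.prob_compl[of "{..m-t}" g] by simp
  also have "measure_pmf.prob g {..m-t} = (\<Sum>i\<in>{..m-t}. pmf g i)"
    by (rule measure_measure_pmf_finite) simp
  also have "\<dots> = Gcdf g (m - t)"
    unfolding Gcdf_def atMost_atLeast0 using g0 by (simp add: sum.atLeast_Suc_atMost)
  finally show ?thesis .
qed



lemma fst_step_le: "y \<in> set_pmf (step V S lam p g np v t st) \<Longrightarrow> fst y \<le> 1"
  unfolding step_def by (auto simp: Let_def split: option.splits if_splits)

lemma step_completion_lower:
  assumes nn: "\<forall>s\<in>{1..S}. 0 \<le> lam s t" and sm: "(\<Sum>s=1..S. lam s t) \<le> 1"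
    and v: "v \<in> {1..V}"
    and np01: "\<forall>s\<in>{1..S}. \<forall>u\<in>{1..V}. 0 \<le> np u s t \<and> np u s t \<le> x u s t"
    and p01: "\<forall>s\<in>{1..S}. \<forall>u\<in>{1..V}. 0 \<le> p u s \<and> p u s \<le> 1"
    and x1: "\<forall>s\<in>{1..S}. \<forall>u\<in>{1..V}. x u s t \<le> 1"
  shows "measure_pmf.expectation (step V S lam p g np v t st) (\<lambda>y. real (fst y)) \<ge>
     (\<Sum>s=1..S. lam s t * ((if st v \<le> t then np v s t * p v s else 0) * (\<Prod>u\<in>{1..<v}. 1 - p u s * x u s t)))"
proof -
  have "measure_pmf.expectation (step V S lam p g np v t st) (\<lambda>y. real (fst y)) =
        measure_pmf.expectation (step V S lam p g np v t st) (\<lambda>y. min 1 (real (fst y)))"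
    by (intro integral_cong_AE) (auto simp: AE_measure_pmf_iff dest: fst_step_le)
  also have "\<dots> = (1 - (\<Sum>s=1..S. lam s t)) * min 1 (real (fst (0::nat, st))) + (\<Sum>s=1..S. lam s t *
       measure_pmf.expectation (Pi_pmf {1..V} False (\<lambda>u. bernoulli_pmf (np u s t))) (\<lambda>N.
       measure_pmf.expectation (Pi_pmf {1..V} False (\<lambda>u. bernoulli_pmf (p u s))) (\<lambda>R.
       measure_pmf.expectation (Pi_pmf {1..V} 0 (\<lambda>u. g)) (\<lambda>Z.
         min 1 (real (fst (if (v \<in> {1..V} \<and> N v \<and> st v \<le> t \<and> R v) \<and> (\<forall>u<v. \<not> (u \<in> {1..V} \<and> N u \<and> st u \<le> t \<and> R u)) then 1::nat else 0,
            \<lambda>u. if u \<in> {1..V} \<and> N u \<and> st u \<le> t then t + Z u else st u)))))))"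
    by (rule E_step[where h="\<lambda>y. min 1 (real (fst y))" and B=1 and lam=lam and S=S and t=t, OF nn sm]) auto
  also have "\<dots> = (\<Sum>s=1..S. lam s t *
       measure_pmf.expectation (Pi_pmf {1..V} False (\<lambda>u. bernoulli_pmf (np u s t))) (\<lambda>N.
       measure_pmf.expectation (Pi_pmf {1..V} False (\<lambda>u. bernoulli_pmf (p u s))) (\<lambda>R.
         if (v \<in> {1..V} \<and> N v \<and> st v \<le> t \<and> R v) \<and> (\<forall>u<v. \<not> (u \<in> {1..V} \<and> N u \<and> st u \<le> t \<and> R u)) then 1 else 0)))"
    apply (simp add: measure_pmf.prob_space)
    apply (intro sum.cong refl arg_cong2[where f="(*)"] Bochner_Integration.integral_cong)
    apply (simp only: of_nat_1 of_nat_0 if_distrib[of real])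
    done
  also have "\<dots> = (\<Sum>s=1..S. lam s t * (\<Prod>u\<in>{1..V}. if u = v then (if st v \<le> t then np v s t * p v s else 0)
                     else if u < v then 1 - (if st u \<le> t then np u s t * p u s else 0) else 1))"
  proof (rule sum.cong[OF refl])
    fix s assume s: "s \<in> {1..S}"
    show "lam s t *
       measure_pmf.expectation (Pi_pmf {1..V} False (\<lambda>u. bernoulli_pmf (np u s t))) (\<lambda>N.
       measure_pmf.expectation (Pi_pmf {1..V} False (\<lambda>u. bernoulli_pmf (p u s))) (\<lambda>R.
         if (v \<in> {1..V} \<and> N v \<and> st v \<le> t \<and> R v) \<and> (\<forall>u<v. \<not> (u \<in> {1..V} \<and> N u \<and> st u \<le> t \<and> R u)) then 1 else 0))
      = lam s t * (\<Prod>u\<in>{1..V}. if u = v then (if st v \<le> t then np v s t * p v s else 0)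
                     else if u < v then 1 - (if st u \<le> t then np u s t * p u s else 0) else 1)"
    proof -
      have ce: "measure_pmf.expectation (Pi_pmf {1..V} False (\<lambda>u. bernoulli_pmf (np u s t))) (\<lambda>N.
       measure_pmf.expectation (Pi_pmf {1..V} False (\<lambda>u. bernoulli_pmf (p u s))) (\<lambda>R.
         if (v \<in> {1..V} \<and> N v \<and> st v \<le> t \<and> R v) \<and> (\<forall>u<v. \<not> (u \<in> {1..V} \<and> N u \<and> st u \<le> t \<and> R u)) then 1 else 0))
      = (\<Prod>u\<in>{1..V}. if u = v then (if st v \<le> t then np v s t * p v s else 0)
                     else if u < v then 1 - (if st u \<le> t then np u s t * p u s else 0) else 1)"
      proof (rule completion_exact[where np="\<lambda>u. np u s t" and pp="\<lambda>u. p u s" and act="\<lambda>u. st u \<le> t" and v=v and V=V])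
        show "v \<in> {1..V}" by (rule v)
        show "\<forall>u\<in>{1..V}. 0 \<le> np u s t \<and> np u s t \<le> 1"
          using np01 x1 s by (meson order_trans)
        show "\<forall>u\<in>{1..V}. 0 \<le> p u s \<and> p u s \<le> 1" using p01 s by blast
      qed
      show ?thesis by (simp only: ce)
    qed
  qed
  also have "\<dots> \<ge> (\<Sum>s=1..S. lam s t * ((if st v \<le> t then np v s t * p v s else 0) * (\<Prod>u\<in>{1..<v}. 1 - p u s * x u s t)))"
  proof (rule sum_mono, rule mult_left_mono)
    fix s assume s: "s \<in> {1..S}"
    show "0 \<le> lam s t" using nn s by auto
    show "(if st v \<le> t then np v s t * p v s else 0) * (\<Prod>u\<in>{1..<v}. 1 - p u s * x u s t)
        \<le> (\<Prod>u\<in>{1..V}. if u = v then (if st v \<le> t then np v s t * p v s else 0)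
                     else if u < v then 1 - (if st u \<le> t then np u s t * p u s else 0) else 1)"
    proof (rule completion_lower_prod[where np="\<lambda>u. np u s t" and pp="\<lambda>u. p u s" and xx="\<lambda>u. x u s t" and act="\<lambda>u. st u \<le> t" and v=v and V=V])
      show "v \<in> {1..V}" by (rule v)
      show "\<forall>u\<in>{1..V}. 0 \<le> np u s t \<and> np u s t \<le> x u s t" using np01 s by blast
      show "\<forall>u\<in>{1..V}. 0 \<le> p u s \<and> p u s \<le> 1" using p01 s by blast
      show "\<forall>u\<in>{1..V}. x u s t \<le> 1" using x1 s by blast
    qed
  qed
  finally show ?thesis .
qed



lemma step_state:
  assumes nn: "\<forall>s\<in>{1..S}. 0 \<le> lam s t" and sm: "(\<Sum>s=1..S. lam s t) \<le> 1"
    and v: "v \<in> {1..V}"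
    and np01: "\<forall>s\<in>{1..S}. 0 \<le> np v s t \<and> np v s t \<le> 1"
    and g0: "pmf g 0 = 0" and m: "t \<le> m"
  shows "measure_pmf.expectation (step V S lam p g np v t st) (\<lambda>y. if m < snd y v then 1 else 0) =
     (if m < st v then 1 else 0) + (if st v \<le> t then (\<Sum>s=1..S. lam s t * np v s t) * (1 - Gcdf g (m - t)) else 0)"
proof -
  define ind where "ind = (if m < st v then 1 else 0 :: real)"
  define k where "k b z = (if m < (if b \<and> st v \<le> t then t + z else st v) then 1 else 0 :: real)" for b z
  have inner: "measure_pmf.expectation (Pi_pmf {1..V} False (\<lambda>u. bernoulli_pmf (np u s t))) (\<lambda>N.
       measure_pmf.expectation (Pi_pmf {1..V} False (\<lambda>u. bernoulli_pmf (p u s))) (\<lambda>R.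
       measure_pmf.expectation (Pi_pmf {1..V} 0 (\<lambda>u. g)) (\<lambda>Z.
         if m < (if v \<in> {1..V} \<and> N v \<and> st v \<le> t then t + Z v else st v) then 1 else 0)))
     = (if st v \<le> t then np v s t * (1 - Gcdf g (m - t)) else ind)" if s: "s \<in> {1..S}" for s
  proof -
    have np: "0 \<le> np v s t" "np v s t \<le> 1" using np01 s by auto
    have "measure_pmf.expectation (Pi_pmf {1..V} False (\<lambda>u. bernoulli_pmf (np u s t))) (\<lambda>N.
       measure_pmf.expectation (Pi_pmf {1..V} False (\<lambda>u. bernoulli_pmf (p u s))) (\<lambda>R.
       measure_pmf.expectation (Pi_pmf {1..V} 0 (\<lambda>u. g)) (\<lambda>Z.
         if m < (if v \<in> {1..V} \<and> N v \<and> st v \<le> t then t + Z v else st v) then 1 else 0)))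
      = measure_pmf.expectation (Pi_pmf {1..V} False (\<lambda>u. bernoulli_pmf (np u s t))) (\<lambda>N.
       measure_pmf.expectation (Pi_pmf {1..V} False (\<lambda>u. bernoulli_pmf (p u s))) (\<lambda>R.
       measure_pmf.expectation (Pi_pmf {1..V} 0 (\<lambda>u. g)) (\<lambda>Z. k (N v) (Z v))))"
      using v by (simp add: k_def)
    also have "\<dots> = measure_pmf.expectation (Pi_pmf {1..V} False (\<lambda>u. bernoulli_pmf (np u s t))) (\<lambda>N.
       measure_pmf.expectation (Pi_pmf {1..V} False (\<lambda>u. bernoulli_pmf (p u s))) (\<lambda>R.
       measure_pmf.expectation g (k (N v))))"
      using v by (subst E_component[where f="k _"]) auto
    also have "\<dots> = measure_pmf.expectation (Pi_pmf {1..V} False (\<lambda>u. bernoulli_pmf (np u s t))) (\<lambda>N.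
       measure_pmf.expectation g (k (N v)))"
      by (simp add: measure_pmf.prob_space)
    also have "\<dots> = measure_pmf.expectation (bernoulli_pmf (np v s t)) (\<lambda>b. measure_pmf.expectation g (k b))"
      using v by (subst E_component[where f="\<lambda>b. measure_pmf.expectation g (k b)"]) auto
    also have "\<dots> = measure_pmf.expectation g (k True) * np v s t + measure_pmf.expectation g (k False) * (1 - np v s t)"
      using np by simp
    also have "measure_pmf.expectation g (k False) = ind"
    proof -
      have "k False = (\<lambda>z. ind)" by (simp add: k_def fun_eq_iff ind_def)
      thus ?thesis by (simp add: measure_pmf.prob_space)
    qed
    also have "measure_pmf.expectation g (k True) = (if st v \<le> t then 1 - Gcdf g (m - t) else ind)"
    proof (cases "st v \<le> t")
      case True
      hence "k True = (\<lambda>z. if m < t + z then 1 else 0)" by (simp add: k_def fun_eq_iff)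
      then show ?thesis using E_tail[OF g0 m] True by simp
    next
      case False
      hence "k True = (\<lambda>z. ind)" by (simp add: k_def fun_eq_iff ind_def)
      then show ?thesis using False by (simp add: measure_pmf.prob_space)
    qed
    finally show ?thesis using m by (auto simp: ind_def algebra_simps)
  qed
  have "measure_pmf.expectation (step V S lam p g np v t st) (\<lambda>y. if m < snd y v then 1 else 0) =
     (1 - (\<Sum>s=1..S. lam s t)) * ind + (\<Sum>s=1..S. lam s t *
       measure_pmf.expectation (Pi_pmf {1..V} False (\<lambda>u. bernoulli_pmf (np u s t))) (\<lambda>N.
       measure_pmf.expectation (Pi_pmf {1..V} False (\<lambda>u. bernoulli_pmf (p u s))) (\<lambda>R.
       measure_pmf.expectation (Pi_pmf {1..V} 0 (\<lambda>u. g)) (\<lambda>Z.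
         if m < (if v \<in> {1..V} \<and> N v \<and> st v \<le> t then t + Z v else st v) then 1 else 0))))"
    unfolding ind_def
    apply (subst E_step[where h="\<lambda>y. if m < snd y v then 1 else 0" and B=1 and lam=lam and S=S and t=t, OF nn sm])
     apply simp
    apply (simp only: snd_conv)
    done
  also have "\<dots> = (1 - (\<Sum>s=1..S. lam s t)) * ind + (\<Sum>s=1..S. lam s t * (if st v \<le> t then np v s t * (1 - Gcdf g (m - t)) else ind))"
    by (intro arg_cong2[where f="(+)"] refl sum.cong arg_cong2[where f="(*)"] inner)
  also have "\<dots> = ind + (if st v \<le> t then (\<Sum>s=1..S. lam s t * np v s t) * (1 - Gcdf g (m - t)) else 0)"
  proof (cases "st v \<le> t")
    case True
    hence "ind = 0" using m by (simp add: ind_def)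
    then show ?thesis using True by (simp add: sum_distrib_right mult.assoc)
  next
    case False
    have "(\<Sum>s=1..S. lam s t * ind) = (\<Sum>s=1..S. lam s t) * ind" by (simp add: sum_distrib_right)
    then show ?thesis using False by (simp add: algebra_simps)
  qed
  finally show ?thesis by (simp add: ind_def)
qed



lemma pmf_int:
  fixes f :: "'a \<Rightarrow> real"
  assumes "\<And>x. x \<in> set_pmf M \<Longrightarrow> \<bar>f x\<bar> \<le> B"
  shows "integrable (measure_pmf M) f"
  by (rule measure_pmf.integrable_const_bound[where B=B]) (use assms in \<open>auto simp: AE_measure_pmf_iff\<close>)

lemma pmf_E_bounds:
  fixes f :: "'a \<Rightarrow> real"
  assumes "\<And>x. x \<in> set_pmf M \<Longrightarrow> a \<le> f x \<and> f x \<le> b"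
  shows "a \<le> measure_pmf.expectation M f \<and> measure_pmf.expectation M f \<le> b"
proof -
  have i: "integrable (measure_pmf M) f"
    by (rule pmf_int[where B="\<bar>a\<bar> + \<bar>b\<bar>"]) (use assms in force)
  show ?thesis
    using measure_pmf.integral_ge_const[OF i, of a] measure_pmf.integral_le_const[OF i, of b] assms
    by (auto simp: AE_measure_pmf_iff)
qed

primrec states ::
  "nat \<Rightarrow> nat \<Rightarrow> (nat \<Rightarrow> nat \<Rightarrow> real) \<Rightarrow> (nat \<Rightarrow> nat \<Rightarrow> real) \<Rightarrow> nat pmf
   \<Rightarrow> (nat \<Rightarrow> nat \<Rightarrow> nat \<Rightarrow> real) \<Rightarrow> nat \<Rightarrow> nat \<Rightarrow> nat \<Rightarrow> (nat \<Rightarrow> nat) \<Rightarrow> (nat \<Rightarrow> nat) pmf" where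
  "states V S lam p g np v 0 t st = return_pmf st"
| "states V S lam p g np v (Suc k) t st =
     bind_pmf (step V S lam p g np v t st) (\<lambda>y. states V S lam p g np v k (Suc t) (snd y))"

lemma states_Suc:
  "states V S lam p g np v (Suc k) t st =
     bind_pmf (states V S lam p g np v k t st) (\<lambda>s. map_pmf snd (step V S lam p g np v (t + k) s))"
proof (induction k arbitrary: t st)
  case 0
  then show ?case by (simp add: map_pmf_def bind_return_pmf)
next
  case (Suc k)
  have "states V S lam p g np v (Suc (Suc k)) t st =
     bind_pmf (step V S lam p g np v t st) (\<lambda>y. states V S lam p g np v (Suc k) (Suc t) (snd y))" by simp
  also have "\<dots> = bind_pmf (step V S lam p g np v t st) (\<lambda>y.
      bind_pmf (states V S lam p g np v k (Suc t) (snd y)) (\<lambda>s. map_pmf snd (step V S lam p g np v (Suc t + k) s)))"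
    by (simp only: Suc.IH)
  also have "\<dots> = bind_pmf (states V S lam p g np v (Suc k) t st) (\<lambda>s. map_pmf snd (step V S lam p g np v (t + Suc k) s))"
    by (simp add: bind_assoc_pmf)
  finally show ?case .
qed

lemma run_bound: "y \<in> set_pmf (run V S lam p g np v n t st) \<Longrightarrow> y \<le> n"
proof (induction n arbitrary: t st y)
  case 0
  then show ?case by simp
next
  case (Suc n)
  from Suc.prems obtain r st' where rs: "(r, st') \<in> set_pmf (step V S lam p g np v t st)"
    and y: "y \<in> (+) r ` set_pmf (run V S lam p g np v n (Suc t) st')"
    by auto
  have "r \<le> 1" using fst_step_le[OF rs] by simp
  moreover obtain z where "z \<in> set_pmf (run V S lam p g np v n (Suc t) st')" "y = r + z" using y by auto
  ultimately show ?case using Suc.IH by fastforce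
qed

lemma hh_bounds: "0 \<le> measure_pmf.expectation (step V S lam p g np v t st) (\<lambda>y. real (fst y)) \<and>
   measure_pmf.expectation (step V S lam p g np v t st) (\<lambda>y. real (fst y)) \<le> 1"
  by (rule pmf_E_bounds) (auto dest: fst_step_le)

lemma E_run:
  "measure_pmf.expectation (run V S lam p g np v n t st) real =
   (\<Sum>k<n. measure_pmf.expectation (states V S lam p g np v k t st)
        (\<lambda>s. measure_pmf.expectation (step V S lam p g np v (t + k) s) (\<lambda>y. real (fst y))))"
proof (induction n arbitrary: t st)
  case 0
  then show ?case by simp
next
  case (Suc n)
  let ?step = "step V S lam p g np v t st"
  let ?hh = "\<lambda>t s. measure_pmf.expectation (step V S lam p g np v t s) (\<lambda>y. real (fst y))"
  have "measure_pmf.expectation (run V S lam p g np v (Suc n) t st) real =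
        measure_pmf.expectation ?step (\<lambda>y. measure_pmf.expectation
           ((\<lambda>(r, st'). map_pmf ((+) r) (run V S lam p g np v n (Suc t) st')) y) real)"
    unfolding run.simps
    by (rule E_bind[where B="real (Suc n)"]) (use run_bound[of _ V S lam p g np v "Suc n" t st] in force)
  also have "\<dots> = measure_pmf.expectation ?step (\<lambda>y. real (fst y) +
        measure_pmf.expectation (run V S lam p g np v n (Suc t) (snd y)) real)"
  proof (rule Bochner_Integration.integral_cong[OF refl])
    fix y :: "nat \<times> (nat \<Rightarrow> nat)"
    obtain r st' where y: "y = (r, st')" by (cases y)
    have int: "integrable (measure_pmf (run V S lam p g np v n (Suc t) st')) real"
      by (rule pmf_int[where B="real n"]) (use run_bound in force)
    show "measure_pmf.expectation ((\<lambda>(r, st'). map_pmf ((+) r) (run V S lam p g np v n (Suc t) st')) y) real =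
        real (fst y) + measure_pmf.expectation (run V S lam p g np v n (Suc t) (snd y)) real"
      using int by (simp add: y measure_pmf.prob_space)
  qed
  also have "\<dots> = measure_pmf.expectation ?step (\<lambda>y. real (fst y)) +
       measure_pmf.expectation ?step (\<lambda>y. measure_pmf.expectation (run V S lam p g np v n (Suc t) (snd y)) real)"
  proof (rule Bochner_Integration.integral_add)
    show "integrable (measure_pmf ?step) (\<lambda>y. real (fst y))"
      by (rule pmf_int[where B=1]) (auto dest: fst_step_le)
    show "integrable (measure_pmf ?step) (\<lambda>y. measure_pmf.expectation (run V S lam p g np v n (Suc t) (snd y)) real)"
    proof (rule pmf_int[where B="real n"])
      fix y
      have "0 \<le> measure_pmf.expectation (run V S lam p g np v n (Suc t) (snd y)) real \<and>
            measure_pmf.expectation (run V S lam p g np v n (Suc t) (snd y)) real \<le> real n"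
        by (rule pmf_E_bounds) (auto dest: run_bound)
      thus "\<bar>measure_pmf.expectation (run V S lam p g np v n (Suc t) (snd y)) real\<bar> \<le> real n" by simp
    qed
  qed
  also have "measure_pmf.expectation ?step (\<lambda>y. measure_pmf.expectation (run V S lam p g np v n (Suc t) (snd y)) real)
     = measure_pmf.expectation ?step (\<lambda>y. \<Sum>k<n. measure_pmf.expectation (states V S lam p g np v k (Suc t) (snd y)) (?hh (Suc t + k)))"
    by (simp only: Suc.IH)
  also have "\<dots> = (\<Sum>k<n. measure_pmf.expectation ?step (\<lambda>y. measure_pmf.expectation (states V S lam p g np v k (Suc t) (snd y)) (?hh (Suc t + k))))"
  proof (rule Bochner_Integration.integral_sum)
    fix k
    show "integrable (measure_pmf ?step) (\<lambda>y. measure_pmf.expectation (states V S lam p g np v k (Suc t) (snd y)) (?hh (Suc t + k)))"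
    proof (rule pmf_int[where B=1])
      fix y
      have "0 \<le> measure_pmf.expectation (states V S lam p g np v k (Suc t) (snd y)) (?hh (Suc t + k)) \<and>
            measure_pmf.expectation (states V S lam p g np v k (Suc t) (snd y)) (?hh (Suc t + k)) \<le> 1"
        by (rule pmf_E_bounds) (use hh_bounds in auto)
      thus "\<bar>measure_pmf.expectation (states V S lam p g np v k (Suc t) (snd y)) (?hh (Suc t + k))\<bar> \<le> 1" by simp
    qed
  qed
  also have "\<dots> = (\<Sum>k<n. measure_pmf.expectation (states V S lam p g np v (Suc k) t st) (?hh (t + Suc k)))"
  proof (rule sum.cong[OF refl])
    fix k
    have "measure_pmf.expectation (states V S lam p g np v (Suc k) t st) (?hh (t + Suc k)) =
       measure_pmf.expectation ?step (\<lambda>y. measure_pmf.expectation (states V S lam p g np v k (Suc t) (snd y)) (?hh (t + Suc k)))"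
      unfolding states.simps
      by (rule E_bind'[where B=1]) (use hh_bounds in auto)
    thus "measure_pmf.expectation ?step (\<lambda>y. measure_pmf.expectation (states V S lam p g np v k (Suc t) (snd y)) (?hh (Suc t + k)))
        = measure_pmf.expectation (states V S lam p g np v (Suc k) t st) (?hh (t + Suc k))" by simp
  qed
  finally have eq: "measure_pmf.expectation (run V S lam p g np v (Suc n) t st) real =
     measure_pmf.expectation ?step (\<lambda>y. real (fst y)) +
     (\<Sum>k<n. measure_pmf.expectation (states V S lam p g np v (Suc k) t st) (?hh (t + Suc k)))" .
  have sh: "(\<Sum>k<Suc n. measure_pmf.expectation (states V S lam p g np v k t st) (?hh (t + k))) =
     measure_pmf.expectation (states V S lam p g np v 0 t st) (?hh (t + 0)) +
     (\<Sum>k<n. measure_pmf.expectation (states V S lam p g np v (Suc k) t st) (?hh (t + Suc k)))"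
    by (rule sum.lessThan_Suc_shift)
  have f0: "measure_pmf.expectation (states V S lam p g np v 0 t st) (?hh (t + 0)) =
     measure_pmf.expectation ?step (\<lambda>y. real (fst y))" by simp
  show ?case unfolding sh f0 eq ..
qed



lemma np_facts:
  assumes lam_nonneg: "\<And>s t. s \<in> {1..S} \<Longrightarrow> t \<in> {1..T} \<Longrightarrow> 0 \<le> lam s t"
    and xP: "in_P V S T lam g x"
    and u: "u \<in> {1..V}" and s: "s \<in> {1..S}" and t: "t \<in> {1..T}"
  shows "0 \<le> sdn_prob S lam g x u s t \<and> sdn_prob S lam g x u s t \<le> x u s t \<and>
         sdn_prob S lam g x u s t * sdn_beta S lam g x u t = x u s t / (2 - mdhr g) \<and>
         sdn_beta S lam g x u t > 0"
proof -
  let ?q = "mdhr g" and ?b = "sdn_beta S lam g x u t"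
  have q1: "?q \<le> 1" by (rule mdhr_le1)
  have d: "1 \<le> 2 - ?q" using q1 by simp
  have bl: "1 / (2 - ?q) \<le> ?b" by (rule beta_lower[OF lam_nonneg xP u t])
  hence db: "1 \<le> (2 - ?q) * ?b" using d by (simp add: field_simps)
  have bpos: "?b > 0" using bl d by (smt (verit) divide_pos_pos)
  have x01: "0 \<le> x u s t" "x u s t \<le> 1" using xP u s t unfolding in_P_def by auto
  have np: "sdn_prob S lam g x u s t = x u s t / ((2 - ?q) * ?b)" unfolding sdn_prob_def ..
  have "x u s t / ((2 - ?q) * ?b) \<le> x u s t"
    using db x01 by (simp add: divide_le_eq mult_le_cancel_left1 mult.commute)
  moreover have "0 \<le> x u s t / ((2 - ?q) * ?b)" using db x01 by simp
  moreover have "x u s t / ((2 - ?q) * ?b) * ?b = x u s t / (2 - ?q)" using bpos d by (simp add: field_simps)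
  ultimately show ?thesis using np bpos by simp
qed

lemma invariant:
  assumes lam_nonneg: "\<And>s t. s \<in> {1..S} \<Longrightarrow> t \<in> {1..T} \<Longrightarrow> 0 \<le> lam s t"
    and lam_sum: "\<And>t. t \<in> {1..T} \<Longrightarrow> (\<Sum>s=1..S. lam s t) \<le> 1"
    and g_pos: "pmf g 0 = 0"
    and xP: "in_P V S T lam g x"
    and v: "v \<in> {1..V}"
  shows "k < T \<Longrightarrow> \<forall>m \<ge> Suc k. measure_pmf.expectation (states V S lam p g (sdn_prob S lam g x) v k 1 (\<lambda>u. 0))
            (\<lambda>s. if m < s v then 1 else 0) =
          (\<Sum>t'=1..k. (\<Sum>s=1..S. lam s t' * x v s t' / (2 - mdhr g)) * (1 - Gcdf g (m - t')))"
proof (induction k)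
  case 0
  then show ?case by simp
next
  case (Suc k)
  let ?np = "sdn_prob S lam g x"
  let ?D = "\<lambda>k. states V S lam p g ?np v k 1 (\<lambda>u. 0)"
  let ?a = "\<lambda>t'. (\<Sum>s=1..S. lam s t' * x v s t' / (2 - mdhr g))"
  let ?A = "\<Sum>s=1..S. lam s (Suc k) * ?np v s (Suc k)"
  have kT: "k < T" and tT: "Suc k \<in> {1..T}" using Suc.prems by auto
  have IH: "\<forall>m \<ge> Suc k. measure_pmf.expectation (?D k) (\<lambda>s. if m < s v then 1 else 0) =
          (\<Sum>t'=1..k. ?a t' * (1 - Gcdf g (m - t')))" using Suc.IH kT by blast
  have npf: "0 \<le> ?np u s (Suc k) \<and> ?np u s (Suc k) \<le> x u s (Suc k) \<and>
         ?np u s (Suc k) * sdn_beta S lam g x u (Suc k) = x u s (Suc k) / (2 - mdhr g) \<and>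
         sdn_beta S lam g x u (Suc k) > 0" if "u \<in> {1..V}" "s \<in> {1..S}" for u s
    by (rule np_facts[OF lam_nonneg xP that tT])
  have x1: "x v s (Suc k) \<le> 1" if "s \<in> {1..S}" for s using xP v that tT unfolding in_P_def by auto
  define act where "act = (\<lambda>s::nat\<Rightarrow>nat. if s v \<le> Suc k then 1 else 0 :: real)"
  have Eact: "measure_pmf.expectation (?D k) act = sdn_beta S lam g x v (Suc k)"
  proof -
    have "act = (\<lambda>s. 1 - (if Suc k < s v then 1 else 0))" by (auto simp: act_def fun_eq_iff)
    hence "measure_pmf.expectation (?D k) act = 1 - measure_pmf.expectation (?D k) (\<lambda>s. if Suc k < s v then 1 else 0)"
      by (simp add: measure_pmf.prob_space pmf_int[where B=1] Bochner_Integration.integral_diff)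
    also have "\<dots> = 1 - (\<Sum>t'=1..k. ?a t' * (1 - Gcdf g (Suc k - t')))" using IH by simp
    also have "\<dots> = sdn_beta S lam g x v (Suc k)"
      unfolding sdn_beta_def by (simp add: sum_distrib_right mult.assoc)
    finally show ?thesis .
  qed
  have Ab: "?A * sdn_beta S lam g x v (Suc k) = ?a (Suc k)"
    unfolding sum_distrib_right
    by (rule sum.cong[OF refl]) (use npf[OF v] in \<open>simp add: mult.assoc\<close>)
  show ?case
  proof (intro allI impI)
    fix m assume m: "Suc (Suc k) \<le> m"
    let ?ind = "\<lambda>m s. if m < s v then 1 else 0 :: real"
    have "measure_pmf.expectation (?D (Suc k)) (?ind m) =
          measure_pmf.expectation (?D k) (\<lambda>s. measure_pmf.expectation (map_pmf snd (step V S lam p g ?np v (1 + k) s)) (?ind m))"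
      unfolding states_Suc by (rule E_bind'[where B=1]) auto
    also have "\<dots> = measure_pmf.expectation (?D k) (\<lambda>s. ?ind m s + ?A * (1 - Gcdf g (m - Suc k)) * act s)"
    proof (rule Bochner_Integration.integral_cong[OF refl])
      fix s :: "nat \<Rightarrow> nat"
      have "measure_pmf.expectation (map_pmf snd (step V S lam p g ?np v (Suc k) s)) (?ind m) =
            measure_pmf.expectation (step V S lam p g ?np v (Suc k) s) (\<lambda>y. if m < snd y v then 1 else 0)"
        by simp
      also have "\<dots> = ?ind m s + (if s v \<le> Suc k then ?A * (1 - Gcdf g (m - Suc k)) else 0)"
      proof (rule step_state)
        show "\<forall>s\<in>{1..S}. 0 \<le> lam s (Suc k)" using lam_nonneg tT by auto
        show "(\<Sum>s=1..S. lam s (Suc k)) \<le> 1" using lam_sum tT by auto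
        show "v \<in> {1..V}" by (rule v)
        show "\<forall>s\<in>{1..S}. 0 \<le> ?np v s (Suc k) \<and> ?np v s (Suc k) \<le> 1"
          using npf[OF v] x1 by (meson order_trans)
        show "pmf g 0 = 0" by (rule g_pos)
        show "Suc k \<le> m" using m by simp
      qed
      finally show "measure_pmf.expectation (map_pmf snd (step V S lam p g ?np v (1 + k) s)) (?ind m) =
         ?ind m s + ?A * (1 - Gcdf g (m - Suc k)) * act s" by (simp add: act_def)
    qed
    also have "\<dots> = measure_pmf.expectation (?D k) (?ind m) + ?A * (1 - Gcdf g (m - Suc k)) * measure_pmf.expectation (?D k) act"
      by (subst Bochner_Integration.integral_add) (auto simp: act_def intro!: pmf_int[where B=1])
    also have "\<dots> = (\<Sum>t'=1..k. ?a t' * (1 - Gcdf g (m - t'))) + ?a (Suc k) * (1 - Gcdf g (m - Suc k))"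
      using IH m Eact Ab by (simp add: algebra_simps)
    also have "\<dots> = (\<Sum>t'=1..Suc k. ?a t' * (1 - Gcdf g (m - t')))" by simp
    finally show "measure_pmf.expectation (?D (Suc k)) (?ind m) = (\<Sum>t'=1..Suc k. ?a t' * (1 - Gcdf g (m - t')))" .
  qed
qed

theorem lemma8:
  fixes V S T :: nat and lam :: "nat \<Rightarrow> nat \<Rightarrow> real" and p :: "nat \<Rightarrow> nat \<Rightarrow> real"
    and g :: "nat pmf" and x :: "nat \<Rightarrow> nat \<Rightarrow> nat \<Rightarrow> real" and v :: nat
  assumes lam_nonneg: "\<And>s t. s \<in> {1..S} \<Longrightarrow> t \<in> {1..T} \<Longrightarrow> 0 \<le> lam s t"
    and lam_sum: "\<And>t. t \<in> {1..T} \<Longrightarrow> (\<Sum>s=1..S. lam s t) \<le> 1"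
    and p_range: "\<And>u s. u \<in> {1..V} \<Longrightarrow> s \<in> {1..S} \<Longrightarrow> 0 \<le> p u s \<and> p u s \<le> 1"
    and g_pos: "pmf g 0 = 0"
    and xP: "in_P V S T lam g x"
    and v: "v \<in> {1..V}"
  shows "sdn_expected_completed V S T lam p g x v \<ge> f_obj S T lam p x v / (2 - mdhr g)"
proof -
  let ?np = "sdn_prob S lam g x"
  let ?D = "\<lambda>k. states V S lam p g ?np v k 1 (\<lambda>u. 0)"
  let ?hh = "\<lambda>t s. measure_pmf.expectation (step V S lam p g ?np v t s) (\<lambda>y. real (fst y))"
  let ?P = "\<lambda>s t. \<Prod>u\<in>{1..<v}. 1 - p u s * x u s t"
  define c where "c t = (\<Sum>s=1..S. lam s t * (?np v s t * p v s * ?P s t))" for t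
  let ?F = "\<lambda>t. \<Sum>s=1..S. lam s t * (\<Prod>u\<in>{1..<v}. 1 - p u s * x u s t) * p v s * x v s t"
  have termb: "?F (Suc k) / (2 - mdhr g) \<le> measure_pmf.expectation (?D k) (?hh (1 + k))" if k: "k < T" for k
  proof -
    have tT: "Suc k \<in> {1..T}" using k by auto
    have npf: "0 \<le> ?np u s (Suc k) \<and> ?np u s (Suc k) \<le> x u s (Suc k) \<and>
         ?np u s (Suc k) * sdn_beta S lam g x u (Suc k) = x u s (Suc k) / (2 - mdhr g) \<and>
         sdn_beta S lam g x u (Suc k) > 0" if "u \<in> {1..V}" "s \<in> {1..S}" for u s
      by (rule np_facts[OF lam_nonneg xP that tT])
    define act where "act = (\<lambda>s::nat\<Rightarrow>nat. if s v \<le> Suc k then 1 else 0 :: real)"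
    have Eact: "measure_pmf.expectation (?D k) act = sdn_beta S lam g x v (Suc k)"
    proof -
      have "act = (\<lambda>s. 1 - (if Suc k < s v then 1 else 0))" by (auto simp: act_def fun_eq_iff)
      hence "measure_pmf.expectation (?D k) act = 1 - measure_pmf.expectation (?D k) (\<lambda>s. if Suc k < s v then 1 else 0)"
        by (simp add: measure_pmf.prob_space pmf_int[where B=1] Bochner_Integration.integral_diff)
      also have "\<dots> = 1 - (\<Sum>t'=1..k. (\<Sum>s=1..S. lam s t' * x v s t' / (2 - mdhr g)) * (1 - Gcdf g (Suc k - t')))"
        using invariant[OF lam_nonneg lam_sum g_pos xP v k] by simp
      also have "\<dots> = sdn_beta S lam g x v (Suc k)"
        unfolding sdn_beta_def by (simp add: sum_distrib_right mult.assoc)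
      finally show ?thesis .
    qed
    have low: "c (Suc k) * act s \<le> ?hh (Suc k) s" for s
    proof -
      have "(\<Sum>s'=1..S. lam s' (Suc k) * ((if s v \<le> Suc k then ?np v s' (Suc k) * p v s' else 0) * ?P s' (Suc k)))
            \<le> ?hh (Suc k) s"
      proof (rule step_completion_lower)
        show "\<forall>s\<in>{1..S}. 0 \<le> lam s (Suc k)" using lam_nonneg tT by auto
        show "(\<Sum>s=1..S. lam s (Suc k)) \<le> 1" using lam_sum tT by auto
        show "v \<in> {1..V}" by (rule v)
        show "\<forall>s\<in>{1..S}. \<forall>u\<in>{1..V}. 0 \<le> ?np u s (Suc k) \<and> ?np u s (Suc k) \<le> x u s (Suc k)"
          using npf by blast
        show "\<forall>s\<in>{1..S}. \<forall>u\<in>{1..V}. 0 \<le> p u s \<and> p u s \<le> 1" using p_range by blast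
        show "\<forall>s\<in>{1..S}. \<forall>u\<in>{1..V}. x u s (Suc k) \<le> 1" using xP tT unfolding in_P_def by auto
      qed
      moreover have "(\<Sum>s'=1..S. lam s' (Suc k) * ((if s v \<le> Suc k then ?np v s' (Suc k) * p v s' else 0) * ?P s' (Suc k)))
            = c (Suc k) * act s"
        by (cases "s v \<le> Suc k") (simp_all add: act_def c_def mult.assoc)
      ultimately show ?thesis by simp
    qed
    have "measure_pmf.expectation (?D k) (\<lambda>s. c (Suc k) * act s) \<le> measure_pmf.expectation (?D k) (?hh (Suc k))"
    proof (rule Bochner_Integration.integral_mono)
      show "integrable (measure_pmf (?D k)) (\<lambda>s. c (Suc k) * act s)"
        by (rule pmf_int[where B="\<bar>c (Suc k)\<bar>"]) (auto simp: act_def)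
      show "integrable (measure_pmf (?D k)) (?hh (Suc k))"
        by (rule pmf_int[where B=1]) (use hh_bounds in auto)
    qed (rule low)
    moreover have "measure_pmf.expectation (?D k) (\<lambda>s. c (Suc k) * act s) = c (Suc k) * sdn_beta S lam g x v (Suc k)"
      using Eact by simp
    moreover have "c (Suc k) * sdn_beta S lam g x v (Suc k) = ?F (Suc k) / (2 - mdhr g)"
      unfolding c_def sum_distrib_right sum_divide_distrib
    proof (rule sum.cong[OF refl])
      fix s assume s: "s \<in> {1..S}"
      have e: "?np v s (Suc k) * sdn_beta S lam g x v (Suc k) = x v s (Suc k) / (2 - mdhr g)" using npf[OF v s] by blast
      have "lam s (Suc k) * (?np v s (Suc k) * p v s * ?P s (Suc k)) * sdn_beta S lam g x v (Suc k) =
            lam s (Suc k) * ?P s (Suc k) * p v s * (?np v s (Suc k) * sdn_beta S lam g x v (Suc k))"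
        by (simp only: ac_simps)
      also have "\<dots> = lam s (Suc k) * ?P s (Suc k) * p v s * x v s (Suc k) / (2 - mdhr g)"
        unfolding e by simp
      finally show "lam s (Suc k) * (?np v s (Suc k) * p v s * ?P s (Suc k)) * sdn_beta S lam g x v (Suc k) =
            lam s (Suc k) * ?P s (Suc k) * p v s * x v s (Suc k) / (2 - mdhr g)" .
    qed
    ultimately show ?thesis by simp
  qed
  have "f_obj S T lam p x v / (2 - mdhr g) = (\<Sum>t=1..T. ?F t / (2 - mdhr g))"
    unfolding f_obj_def sum_divide_distrib ..
  also have "\<dots> = (\<Sum>k<T. ?F (Suc k) / (2 - mdhr g))" by (rule sum_bounds_lt_plus1[symmetric])
  also have "\<dots> \<le> (\<Sum>k<T. measure_pmf.expectation (?D k) (?hh (1 + k)))"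
    by (rule sum_mono) (use termb in auto)
  also have "\<dots> = sdn_expected_completed V S T lam p g x v"
    unfolding sdn_expected_completed_def by (rule E_run[symmetric])
  finally show ?thesis .
qed


end
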